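(* Consider the controlled SI optimal control problem described in the context, with one control per node ($M=N$) and given (fixed) initial conditions. Let $(\boldsymbol i^*(t), \boldsymbol\lambda^*(t), \boldsymbol u^*(t))$, $t\in[0,T]$, be an optimal state trajectory, its associated adjoint trajectory, and optimal controls satisfying the Pontryagin Maximum Principle conditions listed in the context. Then each optimal control $u_j^*(t)$, $1\le j\le N$, is a non-increasing function of $t$ on $[0,T]$.
   Context: Let $N\geq 1$, and let $\boldsymbol A=(A_{jk})$ be an $N\times N$ symmetric matrix with entries in $\{0,1\}$ (adjacency matrix of an undirected, unweighted network on nodes $1,\dots,N$). Fix $\beta>0$, a horizon $T>0$, and initial values $x_{0j}\in[0,1]$. Each node $j$ has its own control $u_j(t)$. The state $i_j(t)\in[0,1]$ (probability node $j$ is informed), with $s_j(t)=1-i_j(t)$, evolves by $\dot i_j(t)=\beta s_j(t)\sum_{k=1}^N A_{jk}i_k(t)+u_j(t)s_j(t)$, $i_j(0)=x_{0j}$, $1\le j\le N$. The objective to be maximized is $J=\frac1N\sum_{j=1}^N i_j(T)-\sum_{j=1}^N\int_0^T g_j(u_j(t))\,dt$, where each $g_j:\mathbb R\to\mathbb R$ is twice differentiable, strictly convex, even, increasing on $[0,\infty)$, and satisfies $g_j(0)=0$. The optimal controls are nonnegative: $u_j^*(t)\ge 0$. The Hamiltonian is $H(\boldsymbol i,\boldsymbol\lambda,\boldsymbol u)=-\sum_{j=1}^N g_j(u_j)+\sum_{l=1}^N\lambda_l\big(\beta s_l\sum_{k=1}^N A_{lk}i_k+u_l s_l\big)$ with $s_l=1-i_l$.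 The Pontryagin conditions are: $\boldsymbol i^*$ solves the state equations above; the adjoint variables satisfy $\dot\lambda_j^*(t)=-\beta\sum_{l=1}^N\lambda_l^*(t)s_l^*(t)A_{lj}+\beta\lambda_j^*(t)\sum_{k=1}^N A_{jk}i_k^*(t)+\lambda_j^*(t)u_j^*(t)$ with $\lambda_j^*(T)=1/N$; and for each $t$, $\boldsymbol u^*(t)$ maximizes $H(\boldsymbol i^*(t),\boldsymbol\lambda^*(t),\cdot)$, which gives $g_j'(u_j^*(t))=\lambda_j^*(t)s_j^*(t)$ for each $j$. *)

theory Defs
  imports "HOL-Analysis.Analysis"
begin

definition strictly_convex_on :: "real set \<Rightarrow> (real \<Rightarrow> real) \<Rightarrow> bool" where
  "strictly_convex_on S f \<longleftrightarrow>
     (\<forall>x\<in>S. \<forall>y\<in>S. \<forall>a::real. x \<noteq> y \<and> 0 < a \<and> a < 1 \<longrightarrow>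
        f (a * x + (1 - a) * y) < a * f x + (1 - a) * f y)"

definition hamiltonian ::
  "nat \<Rightarrow> (nat \<Rightarrow> nat \<Rightarrow> real) \<Rightarrow> real \<Rightarrow> (nat \<Rightarrow> real \<Rightarrow> real)
   \<Rightarrow> (nat \<Rightarrow> real) \<Rightarrow> (nat \<Rightarrow> real) \<Rightarrow> (nat \<Rightarrow> real) \<Rightarrow> real" where
  "hamiltonian N A \<beta> g i lam u =
     - (\<Sum>j=1..N. g j (u j))
     + (\<Sum>l=1..N. lam l * (\<beta> * (1 - i l) * (\<Sum>k=1..N. A l k * i k) + u l * (1 - i l)))"

end

theory Submission
  imports Defs
begin

lemma sc_convex:
  assumes "strictly_convex_on UNIV g"
  shows "convex_on UNIV g"
proof (rule convex_onI)
  fix t x y :: real assume t: "t > 0" "t < 1"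
  show "g ((1 - t) *\<^sub>R x + t *\<^sub>R y) \<le> (1 - t) * g x + t * g y"
  proof (cases "x = y")
    case True
    have "(1 - t) * x + t * x = x" by (simp add: algebra_simps)
    then show ?thesis using True by (simp add: algebra_simps)
  next
    case False
    have "\<forall>x\<in>UNIV. \<forall>y\<in>UNIV. \<forall>a::real. x \<noteq> y \<and> 0 < a \<and> a < 1 \<longrightarrow>
        g (a * x + (1 - a) * y) < a * g x + (1 - a) * g y" using assms unfolding strictly_convex_on_def .
    hence "g ((1-t) * x + (1 - (1-t)) * y) < (1-t) * g x + (1 - (1-t)) * g y"
    proof -
      have "0 < 1 - t" "1 - t < 1" using t by auto
      thus ?thesis using False \<open>\<forall>x\<in>UNIV. _\<close> by blast
    qed
    then show ?thesis by simp
  qed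
qed auto

lemma tangent:
  assumes "convex_on UNIV g" "g differentiable (at c)"
  shows "g x - g c \<ge> deriv g c * (x - c)"
  using convex_on_imp_above_tangent[of UNIV g c x "deriv g c"] assms
  by (simp add: DERIV_deriv_iff_real_differentiable)

lemma deriv_strict:
  assumes sc: "strictly_convex_on UNIV g" and d: "\<forall>x. g differentiable (at x)"
    and ab: "a < b"
  shows "deriv g a < deriv g b"
proof -
  have cv: "convex_on UNIV g" using sc_convex[OF sc] .
  define m where "m = (a + b) / 2"
  have "g ((1/2) * a + (1 - 1/2) * b) < (1/2) * g a + (1 - 1/2) * g b"
  proof -
    have "\<forall>x\<in>UNIV. \<forall>y\<in>UNIV. \<forall>a::real. x \<noteq> y \<and> 0 < a \<and> a < 1 \<longrightarrow>
        g (a * x + (1 - a) * y) < a * g x + (1 - a) * g y" using sc unfolding strictly_convex_on_def .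
    moreover have "a \<noteq> b" "(0::real) < 1/2" "(1/2::real) < 1" using ab by auto
    ultimately show ?thesis by blast
  qed
  moreover have "(1/2) * a + (1 - 1/2) * b = m" by (simp add: m_def field_simps)
  ultimately have s: "g m < (g a + g b) / 2" by simp
  have t1: "g m - g a \<ge> deriv g a * (m - a)" using tangent[OF cv] d by blast
  have t2: "g m - g b \<ge> deriv g b * (m - b)" using tangent[OF cv] d by blast
  have h: "m - a = (b - a) / 2" "m - b = - ((b - a) / 2)" by (simp_all add: m_def field_simps)
  have pos: "(b - a) / 2 > 0" using ab by simp
  from t1 t2 s h have "deriv g a * ((b - a) / 2) < deriv g b * ((b - a) / 2)" by auto
  thus ?thesis using pos by simp
qed

lemma deriv_zero_even:
  assumes d: "g differentiable (at 0)" and e: "\<forall>x. g (- x) = g x"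
  shows "deriv g 0 = (0::real)"
proof -
  have D: "(g has_real_derivative deriv g 0) (at 0)"
    using d by (simp add: DERIV_deriv_iff_real_differentiable)
  have "((\<lambda>x. g (- x)) has_real_derivative - deriv g 0) (at 0)"
    using DERIV_mirror[where f=g and x=0 and y="deriv g 0"] D by simp
  moreover have "(\<lambda>x. g (- x)) = g" using e by auto
  ultimately have "(g has_real_derivative - deriv g 0) (at 0)" by simp
  with D have "deriv g 0 = - deriv g 0" using DERIV_unique by blast
  thus ?thesis by simp
qed

lemma deriv_nonneg:
  assumes sc: "strictly_convex_on UNIV g" and d: "\<forall>x. g differentiable (at x)"
    and e: "\<forall>x. g (- x) = g x" and u: "u \<ge> 0"
  shows "deriv g u \<ge> (0::real)"
proof (cases "u = 0")
  case True then show ?thesis using deriv_zero_even[of g] d e by simp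
next
  case False
  then have "deriv g 0 < deriv g u" using deriv_strict[OF sc d] u by simp
  then show ?thesis using deriv_zero_even[of g] d e by simp
qed

theorem theorem1:
  fixes N :: nat and A :: "nat \<Rightarrow> nat \<Rightarrow> real" and \<beta> T :: real
    and x0 :: "nat \<Rightarrow> real" and g :: "nat \<Rightarrow> real \<Rightarrow> real"
    and i lam u :: "nat \<Rightarrow> real \<Rightarrow> real"
  assumes N_pos: "N \<ge> 1"
    and A_01: "\<forall>j\<in>{1..N}. \<forall>k\<in>{1..N}. A j k = 0 \<or> A j k = 1"
    and A_sym: "\<forall>j\<in>{1..N}. \<forall>k\<in>{1..N}. A j k = A k j"
    and beta_pos: "\<beta> > 0" and T_pos: "T > 0"
    and x0_range: "\<forall>j\<in>{1..N}. 0 \<le> x0 j \<and> x0 j \<le> 1"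
    and g_diff: "\<forall>j\<in>{1..N}. \<forall>x. g j differentiable (at x)"
    and g_diff2: "\<forall>j\<in>{1..N}. \<forall>x. deriv (g j) differentiable (at x)"
    and g_conv: "\<forall>j\<in>{1..N}. strictly_convex_on UNIV (g j)"
    and g_even: "\<forall>j\<in>{1..N}. \<forall>x. g j (- x) = g j x"
    and g_mono: "\<forall>j\<in>{1..N}. mono_on {0..} (g j)"
    and g_zero: "\<forall>j\<in>{1..N}. g j 0 = 0"
    \<comment> \<open>state equations\<close>
    and i_range: "\<forall>j\<in>{1..N}. \<forall>t\<in>{0..T}. 0 \<le> i j t \<and> i j t \<le> 1"
    and i_init: "\<forall>j\<in>{1..N}. i j 0 = x0 j"
    and i_ode: "\<forall>j\<in>{1..N}. \<forall>t\<in>{0..T}.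
       (i j has_real_derivative
          (\<beta> * (1 - i j t) * (\<Sum>k=1..N. A j k * i k t) + u j t * (1 - i j t)))
       (at t within {0..T})"
    \<comment> \<open>adjoint equations\<close>
    and lam_ode: "\<forall>j\<in>{1..N}. \<forall>t\<in>{0..T}.
       (lam j has_real_derivative
          (- \<beta> * (\<Sum>l=1..N. lam l t * (1 - i l t) * A l j)
           + \<beta> * lam j t * (\<Sum>k=1..N. A j k * i k t) + lam j t * u j t))
       (at t within {0..T})"
    and lam_final: "\<forall>j\<in>{1..N}. lam j T = 1 / real N"
    \<comment> \<open>optimal controls: nonnegative, maximize the Hamiltonian\<close>
    and u_nonneg: "\<forall>j\<in>{1..N}. \<forall>t\<in>{0..T}. u j t \<ge> 0"
    and H_max: "\<forall>t\<in>{0..T}. \<forall>v :: nat \<Rightarrow> real.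
       hamiltonian N A \<beta> g (\<lambda>l. i l t) (\<lambda>l. lam l t) v
         \<le> hamiltonian N A \<beta> g (\<lambda>l. i l t) (\<lambda>l. lam l t) (\<lambda>l. u l t)"
    and u_stationary: "\<forall>j\<in>{1..N}. \<forall>t\<in>{0..T}. deriv (g j) (u j t) = lam j t * (1 - i j t)"
  shows "\<forall>j\<in>{1..N}. \<forall>t1\<in>{0..T}. \<forall>t2\<in>{0..T}. t1 \<le> t2 \<longrightarrow> u j t2 \<le> u j t1"
proof (intro ballI impI)
  fix j t1 t2 assume j: "j \<in> {1..N}" and t1: "t1 \<in> {0..T}" and t2: "t2 \<in> {0..T}" and le: "t1 \<le> t2"
  define phi where "phi l t = lam l t * (1 - i l t)" for l t
  have phi_nn: "phi l t \<ge> 0" if "l \<in> {1..N}" "t \<in> {0..T}" for l t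
  proof -
    have "deriv (g l) (u l t) \<ge> 0"
      using deriv_nonneg[of "g l" "u l t"] g_conv g_diff g_even u_nonneg that by blast
    thus ?thesis using u_stationary that unfolding phi_def by simp
  qed
  define D where "D t = - \<beta> * (1 - i j t) * (\<Sum>l=1..N. phi l t * A l j)" for t
  have Dle: "D t \<le> 0" if t: "t \<in> {0..T}" for t
  proof -
    have "(\<Sum>l=1..N. phi l t * A l j) \<ge> 0"
    proof (rule sum_nonneg)
      fix l assume l: "l \<in> {1..N}"
      have "A l j = 0 \<or> A l j = 1" using A_01 l j by blast
      hence "A l j \<ge> 0" by auto
      then show "phi l t * A l j \<ge> 0" using phi_nn[OF l t] by simp
    qed
    moreover have "1 - i j t \<ge> 0" using i_range j t by auto
    ultimately show ?thesis unfolding D_def using beta_pos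
      by (simp add: mult_nonneg_nonneg)
  qed
  have der: "(phi j has_real_derivative D t) (at t within {0..T})" if t: "t \<in> {0..T}" for t
  proof -
    let ?LD = "- \<beta> * (\<Sum>l=1..N. lam l t * (1 - i l t) * A l j)
           + \<beta> * lam j t * (\<Sum>k=1..N. A j k * i k t) + lam j t * u j t"
    let ?ID = "\<beta> * (1 - i j t) * (\<Sum>k=1..N. A j k * i k t) + u j t * (1 - i j t)"
    have L: "(lam j has_real_derivative ?LD) (at t within {0..T})" using lam_ode j t by blast
    have I: "(i j has_real_derivative ?ID) (at t within {0..T})" using i_ode j t by blast
    have I2: "((\<lambda>x. 1 - i j x) has_real_derivative 0 - ?ID) (at t within {0..T})"
      by (rule DERIV_diff[OF DERIV_const I])
    have P: "((\<lambda>x. lam j x * (1 - i j x)) has_real_derivative ?LD * (1 - i j t) + (0 - ?ID) * lam j t) (at t within {0..T})"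
      by (rule DERIV_mult[OF L I2])
    have ph: "phi j = (\<lambda>x. lam j x * (1 - i j x))" unfolding phi_def by auto
    have "(phi j has_real_derivative
        ((- \<beta> * (\<Sum>l=1..N. lam l t * (1 - i l t) * A l j)
           + \<beta> * lam j t * (\<Sum>k=1..N. A j k * i k t) + lam j t * u j t) * (1 - i j t)
         + lam j t * (- (\<beta> * (1 - i j t) * (\<Sum>k=1..N. A j k * i k t) + u j t * (1 - i j t)))))
        (at t within {0..T})"
      using P unfolding ph by (simp add: mult.commute)
    moreover have "((- \<beta> * (\<Sum>l=1..N. lam l t * (1 - i l t) * A l j)
           + \<beta> * lam j t * (\<Sum>k=1..N. A j k * i k t) + lam j t * u j t) * (1 - i j t)
         + lam j t * (- (\<beta> * (1 - i j t) * (\<Sum>k=1..N. A j k * i k t) + u j t * (1 - i j t))))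
       = D t"
      unfolding D_def phi_def by (simp add: algebra_simps)
    ultimately show ?thesis by simp
  qed
  have "\<exists>x\<in>{t1..t2}. phi j t2 - phi j t1 = (\<lambda>h. D x * h) (t2 - t1)"
  proof (rule mvt_very_simple[OF le])
    fix x assume "t1 \<le> x" "x \<le> t2"
    hence x: "x \<in> {0..T}" using t1 t2 by auto
    have sub: "{t1..t2} \<subseteq> {0..T}" using t1 t2 by auto
    show "(phi j has_derivative (\<lambda>h. D x * h)) (at x within {t1..t2})"
    proof -
      have e: "(\<lambda>h. h * D x) = (\<lambda>h. D x * h)" by (auto simp: fun_eq_iff)
      have "(phi j has_derivative (\<lambda>h. D x * h)) (at x within {t1..t2})"
        using has_derivative_subset[OF der[OF x, unfolded has_field_derivative_def] sub] by simp
      then show ?thesis by (simp only: e)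
    qed
  qed
  then obtain x where x: "x \<in> {t1..t2}" and eq: "phi j t2 - phi j t1 = D x * (t2 - t1)" by auto
  have "x \<in> {0..T}" using x t1 t2 by auto
  hence "D x * (t2 - t1) \<le> 0" using Dle le by (simp add: mult_nonpos_nonneg)
  hence ph: "phi j t2 \<le> phi j t1" using eq by simp
  show "u j t2 \<le> u j t1"
  proof (rule ccontr)
    assume "\<not> u j t2 \<le> u j t1"
    hence "deriv (g j) (u j t1) < deriv (g j) (u j t2)"
      using deriv_strict[of "g j"] g_conv g_diff j by auto
    thus False using ph u_stationary j t1 t2 unfolding phi_def by auto
  qed
qed

end
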